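(* Let $(\mathbb S,+,\cdot)$ be an S-Field. If $\alpha\in\mathbb S_0$ with $\alpha\neq 0$, then the Standard Base $q_0(\alpha)$ is Reversible, with $\alpha^*=\alpha^{-1}$; that is, $q_0(1)=\alpha^{-1}\cdot(q_0(\alpha)+\alpha)-\alpha$.
   Context: An S-Structure is a triple $(\mathbb S,+,\cdot)$ where $\mathbb S$ is a set and $+,\cdot$ are binary operations on $\mathbb S$ such that: $(\mathbb S,+)$ is a commutative group with identity $0$ (the inverse of $s$ is written $-s$, and $s-t:=s+(-t)$); $\mathbb S$ is closed under $\cdot$; and there exists $s\in\mathbb S$ with $0\cdot s\neq 0$ or $s\cdot 0\neq 0$. Multiplication binds tighter than addition. The structures considered come with a distinguished element of $\mathbb S$ denoted $1$. It is Commutative if $s\cdot t=t\cdot s$ for all $s,t$. For a Commutative S-Structure and $\alpha\in\mathbb S$, put $\mathbb S_\alpha=\{s\in\mathbb S:0\cdot s=s\cdot 0=\alpha\}$ and $\Lambda=\{\alpha\in\mathbb S:\mathbb S_\alpha\neq\emptyset\}$. Wheel Distributive: $s\cdot(t+r)+(s\cdot 0)=(s\cdot t)+(s\cdot r)$ for all $s,t,r\in\mathbb S$. S-Associative: for all $m,n\in\mathbb S_0$ and $s\in\mathbb S$, $m\cdot(n\cdot s)=(m\cdot n)\cdot s-([(m-1)\cdot(n-1)]\cdot(0\cdot s))$. Base: if $\mathbb S_0\neq\emptyset$ and $\alpha\in\Lambda$, $q\in\mathbb S_\alpha$ is a Base for $\mathbb S_\alpha$ if $q+\beta\in\mathbb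 S_\alpha$ for all $\beta\in\mathbb S_0$ and every $s\in\mathbb S_\alpha$ equals $q+\beta$ for some $\beta\in\mathbb S_0$. Coordinated: $\mathbb S_0\neq\emptyset$ and every $\mathbb S_\alpha$ with $\alpha\in\Lambda$ has a Base. Standard Bases: a Coordinated Commutative S-Structure has Standard Bases if there is a specified element $q_0(1)\in\mathbb S_1$ which is a Base for $\mathbb S_1$, and for every $\alpha\in\Lambda$ the element $q_0(\alpha):=\alpha\cdot(q_0(1)+1)-1$ (the Standard Base of $\mathbb S_\alpha$) lies in $\mathbb S_\alpha$ and is a Base for $\mathbb S_\alpha$. An Essential S-Structure is an S-Structure that is Commutative, Wheel Distributive, S-Associative, has Standard Bases (in particular is Coordinated), satisfies $0,1\in\mathbb S_0$, and satisfies $\mathbb S_0=\{1\cdot x:x\in\mathbb S_0\}$. A Unity is an element $e\in\Lambda$ with $e\cdot s=s\cdot e=s$ for all $s\in\mathbb S$. Scalar Inverses: the structure has a Unity $e$ and for every $x\in\mathbb S_0$ with $x\neq 0$ there is $x^{-1}\in\mathbb S_0$ with $x\cdot x^{-1}=x^{-1}\cdot x=e$. An S-Ring is an Essential S-Structure with a Unity; an S-Field is an S-Ring with Scalar Inverses. Reversible: in an Essential S-Structure, for $\alpha\in\Lambda$, the Standard Base $q_0(\alpha)$ is Reversible if there exists $\alpha^*\in\Lambda$ with $q_0(1)=\alpha^*\cdot(q_0(\alpha)+\alpha)-\alpha$. *)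

theory Defs
  imports Main
begin

(* The carrier S is the whole type 'a; (S,+) is the commutative group given by
   the class ab_group_add (identity 0, inverse uminus, s - t = s + (-t)).
   M is the multiplication, u is the distinguished element 1 of the structure,
   q1 is the specified Standard Base q_0(1). *)

definition S_structure :: "('a::ab_group_add \<Rightarrow> 'a \<Rightarrow> 'a) \<Rightarrow> bool" where
  "S_structure M \<longleftrightarrow> (\<exists>s. M 0 s \<noteq> 0 \<or> M s 0 \<noteq> 0)"

definition commutative :: "('a \<Rightarrow> 'a \<Rightarrow> 'a) \<Rightarrow> bool" where
  "commutative M \<longleftrightarrow> (\<forall>s t. M s t = M t s)"

definition Sa :: "('a::ab_group_add \<Rightarrow> 'a \<Rightarrow> 'a) \<Rightarrow> 'a \<Rightarrow> 'a set" where
  "Sa M a = {s. M 0 s = a \<and> M s 0 = a}"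

definition Lam :: "('a::ab_group_add \<Rightarrow> 'a \<Rightarrow> 'a) \<Rightarrow> 'a set" where
  "Lam M = {a. Sa M a \<noteq> {}}"

definition wheel_distributive :: "('a::ab_group_add \<Rightarrow> 'a \<Rightarrow> 'a) \<Rightarrow> bool" where
  "wheel_distributive M \<longleftrightarrow> (\<forall>s t r. M s (t + r) + M s 0 = M s t + M s r)"

definition S_associative :: "('a::ab_group_add \<Rightarrow> 'a \<Rightarrow> 'a) \<Rightarrow> 'a \<Rightarrow> bool" where
  "S_associative M u \<longleftrightarrow>
     (\<forall>m\<in>Sa M 0. \<forall>n\<in>Sa M 0. \<forall>s.
        M m (M n s) = M (M m n) s - M (M (m - u) (n - u)) (M 0 s))"

definition is_base :: "('a::ab_group_add \<Rightarrow> 'a \<Rightarrow> 'a) \<Rightarrow> 'a \<Rightarrow> 'a \<Rightarrow> bool" where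
  "is_base M a q \<longleftrightarrow> Sa M 0 \<noteq> {} \<and> a \<in> Lam M \<and> q \<in> Sa M a \<and>
     (\<forall>\<beta>\<in>Sa M 0. q + \<beta> \<in> Sa M a) \<and> (\<forall>s\<in>Sa M a. \<exists>\<beta>\<in>Sa M 0. s = q + \<beta>)"

definition coordinated :: "('a::ab_group_add \<Rightarrow> 'a \<Rightarrow> 'a) \<Rightarrow> bool" where
  "coordinated M \<longleftrightarrow> Sa M 0 \<noteq> {} \<and> (\<forall>a\<in>Lam M. \<exists>q. is_base M a q)"

definition q0 :: "('a::ab_group_add \<Rightarrow> 'a \<Rightarrow> 'a) \<Rightarrow> 'a \<Rightarrow> 'a \<Rightarrow> 'a \<Rightarrow> 'a" where
  "q0 M u q1 a = M a (q1 + u) - u"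

definition standard_bases :: "('a::ab_group_add \<Rightarrow> 'a \<Rightarrow> 'a) \<Rightarrow> 'a \<Rightarrow> 'a \<Rightarrow> bool" where
  "standard_bases M u q1 \<longleftrightarrow> coordinated M \<and> commutative M \<and>
     q1 \<in> Sa M u \<and> is_base M u q1 \<and>
     (\<forall>a\<in>Lam M. q0 M u q1 a \<in> Sa M a \<and> is_base M a (q0 M u q1 a))"

definition essential :: "('a::ab_group_add \<Rightarrow> 'a \<Rightarrow> 'a) \<Rightarrow> 'a \<Rightarrow> 'a \<Rightarrow> bool" where
  "essential M u q1 \<longleftrightarrow> S_structure M \<and> commutative M \<and> wheel_distributive M \<and>
     S_associative M u \<and> standard_bases M u q1 \<and> 0 \<in> Sa M 0 \<and> u \<in> Sa M 0 \<and>
     Sa M 0 = (\<lambda>x. M u x) ` Sa M 0"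

definition unity :: "('a::ab_group_add \<Rightarrow> 'a \<Rightarrow> 'a) \<Rightarrow> 'a \<Rightarrow> bool" where
  "unity M e \<longleftrightarrow> e \<in> Lam M \<and> (\<forall>s. M e s = s \<and> M s e = s)"

definition scalar_inverses :: "('a::ab_group_add \<Rightarrow> 'a \<Rightarrow> 'a) \<Rightarrow> bool" where
  "scalar_inverses M \<longleftrightarrow> (\<exists>e. unity M e \<and>
     (\<forall>x\<in>Sa M 0. x \<noteq> 0 \<longrightarrow> (\<exists>y\<in>Sa M 0. M x y = e \<and> M y x = e)))"

definition S_ring :: "('a::ab_group_add \<Rightarrow> 'a \<Rightarrow> 'a) \<Rightarrow> 'a \<Rightarrow> 'a \<Rightarrow> bool" where
  "S_ring M u q1 \<longleftrightarrow> essential M u q1 \<and> (\<exists>e. unity M e)"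

definition S_field :: "('a::ab_group_add \<Rightarrow> 'a \<Rightarrow> 'a) \<Rightarrow> 'a \<Rightarrow> 'a \<Rightarrow> bool" where
  "S_field M u q1 \<longleftrightarrow> S_ring M u q1 \<and> scalar_inverses M"

definition reversible :: "('a::ab_group_add \<Rightarrow> 'a \<Rightarrow> 'a) \<Rightarrow> 'a \<Rightarrow> 'a \<Rightarrow> 'a \<Rightarrow> bool" where
  "reversible M u q1 a \<longleftrightarrow> a \<in> Lam M \<and>
     (\<exists>a'\<in>Lam M. q1 = M a' (q0 M u q1 a + a) - a)"

end

theory Submission
  imports Defs
begin

theorem proposition4p2p1:
  fixes M :: "'a::ab_group_add \<Rightarrow> 'a \<Rightarrow> 'a" and u q1 e a b :: 'a
  assumes "S_field M u q1"
    and "a \<in> Sa M 0" and "a \<noteq> 0"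
    and "unity M e"
    and "b \<in> Sa M 0" and "M a b = e" and "M b a = e"
  shows "reversible M u q1 a \<and> b \<in> Lam M \<and> q1 = M b (q0 M u q1 a + a) - a"
proof -
  have ess: "essential M u q1" using assms(1) unfolding S_field_def S_ring_def by blast
  have comm: "\<And>s t. M s t = M t s" using ess unfolding essential_def commutative_def by blast
  have wd: "\<And>s t r. M s (t + r) + M s 0 = M s t + M s r"
    using ess unfolding essential_def wheel_distributive_def by blast
  have sa: "\<And>m n s. m \<in> Sa M 0 \<Longrightarrow> n \<in> Sa M 0 \<Longrightarrow>
      M m (M n s) = M (M m n) s - M (M (m - u) (n - u)) (M 0 s)"
    using ess unfolding essential_def S_associative_def by blast
  have S0: "\<And>c. c \<in> Sa M 0 \<longleftrightarrow> M 0 c = 0" using comm unfolding Sa_def by auto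
  have z0: "M 0 0 = 0" using ess unfolding essential_def Sa_def by auto
  have u0: "u \<in> Sa M 0" using ess unfolding essential_def by blast
  have img: "Sa M 0 = (\<lambda>x. M u x) ` Sa M 0" using ess unfolding essential_def by blast
  have q1u: "M 0 q1 = u" using ess unfolding essential_def standard_bases_def Sa_def by blast
  have unit: "\<And>s. M e s = s \<and> M s e = s" using assms(4) unfolding unity_def by blast
  have e0: "e \<in> Sa M 0" using unit[of 0] S0 by simp
  have add: "\<And>c t r. c \<in> Sa M 0 \<Longrightarrow> M c (t + r) = M c t + M c r"
  proof -
    fix c t r assume "c \<in> Sa M 0"
    then have "M c 0 = 0" using comm[of c 0] S0 by simp
    then show "M c (t + r) = M c t + M c r" using wd[of c t r] by simp
  qed
  have neg: "\<And>c t. c \<in> Sa M 0 \<Longrightarrow> M c (- t) = - M c t"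
  proof -
    fix c t assume h: "c \<in> Sa M 0"
    have "M c (t + - t) = M c t + M c (- t)" using add[OF h] .
    moreover have "M c 0 = 0" using h comm[of c 0] S0 by simp
    ultimately show "M c (- t) = - M c t" by (simp add: eq_neg_iff_add_eq_0 add.commute)
  qed
  have sub: "\<And>c t r. c \<in> Sa M 0 \<Longrightarrow> M c (t - r) = M c t - M c r"
  proof -
    fix c t r assume h: "c \<in> Sa M 0"
    have "M c (t + - r) = M c t + M c (- r)" using add[OF h] .
    then show "M c (t - r) = M c t - M c r" by (simp only: diff_conv_add_uminus neg[OF h])
  qed
  have zadd: "\<And>t r. M 0 (t + r) = M 0 t + M 0 r" using wd[of 0] z0 by simp
  have zneg: "\<And>t. M 0 (- t) = - M 0 t"
  proof -
    fix t have "M 0 (t + - t) = M 0 t + M 0 (- t)" using zadd .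
    then show "M 0 (- t) = - M 0 t" using z0 by (simp add: eq_neg_iff_add_eq_0 add.commute)
  qed
  have S0sub: "\<And>x y. x \<in> Sa M 0 \<Longrightarrow> y \<in> Sa M 0 \<Longrightarrow> x - y \<in> Sa M 0"
  proof -
    fix x y assume "x \<in> Sa M 0" "y \<in> Sa M 0"
    then have "M 0 x = 0" "M 0 y = 0" using S0 by auto
    moreover have "M 0 (x + - y) = M 0 x + M 0 (- y)" using zadd .
    ultimately have "M 0 (x + - y) = 0" using zneg by simp
    then show "x - y \<in> Sa M 0" using S0 by (simp only: diff_conv_add_uminus)
  qed
  have ff: "\<And>s. M 0 (M 0 s) = 0"
  proof -
    fix s
    have "M u (M e s) = M (M u e) s - M (M (u - u) (e - u)) (M 0 s)" using sa[OF u0 e0] .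
    moreover have "M (u - u) (e - u) = 0" using S0sub[OF e0 u0] S0[of "e - u"] by simp
    moreover have "M e s = s" "M u e = u" using unit by auto
    ultimately show "M 0 (M 0 s) = 0" by simp
  qed
  obtain x where x0: "x \<in> Sa M 0" and ux: "M u x = e" using img e0 by (metis imageE)
  have inj: "\<And>s. M x (M u s) = s"
  proof -
    fix s
    have "M x (M u s) = M (M x u) s - M (M (x - u) (u - u)) (M 0 s)" using sa[OF x0 u0] .
    moreover have "M (x - u) (u - u) = 0" using S0sub[OF x0 u0] S0[of "x - u"] comm[of "x - u" 0] by simp
    moreover have "M e s = s" using unit by auto
    moreover have "M x u = e" using ux comm[of x u] by simp
    ultimately show "M x (M u s) = s" using ff[of s] by simp
  qed
  have "M e (M 0 q1) = M (M e 0) q1 - M (M (e - u) (0 - u)) (M 0 q1)"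
    using sa[OF e0, of 0 q1] S0[of 0] z0 by simp
  then have h1: "M (M (e - u) (- u)) u = 0" using q1u unit by simp
  have "M (e - u) (- u) = - M (e - u) u" using neg[OF S0sub[OF e0 u0]] .
  also have "M (e - u) u = M u (e - u)" using comm .
  also have "M u (e - u) = M u e - M u u" using sub[OF u0] .
  also have "M u e = u" using unit by auto
  finally have h2: "M (e - u) (- u) = M u u - u" by simp
  have "M u (M u u - u) = M (M u u - u) u" using comm .
  also have "\<dots> = 0" using h1 h2 by simp
  finally have "M u (M u u) - M u u = 0" using sub[OF u0, of "M u u" u] by simp
  then have h3: "M u (M u u) = M u u" by simp
  have uu: "M u u = u" using inj[of "M u u"] inj[of u] h3 by simp
  have "M x (M u e) = e" using inj .
  moreover have "M u e = u" using unit by auto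
  ultimately have ue: "u = e" using inj[of u] uu by simp
  have fs: "M 0 (q1 + e) = e"
  proof -
    have "M 0 (q1 + e) = M 0 q1 + M 0 e" using zadd .
    moreover have "M 0 e = 0" using e0 S0 by simp
    ultimately show ?thesis using q1u ue by simp
  qed
  have Mba: "M b a = e" using assms(7) .
  have b1: "M b (M a (q1 + e)) = q1 + e - M (b - e) (a - e)"
  proof -
    have "M b (M a (q1 + e)) = M (M b a) (q1 + e) - M (M (b - u) (a - u)) (M 0 (q1 + e))"
      using sa[OF assms(5) assms(2)] .
    also have "\<dots> = M e (q1 + e) - M (M (b - e) (a - e)) e" using Mba fs ue by simp
    also have "\<dots> = q1 + e - M (b - e) (a - e)" using unit by simp
    finally show ?thesis .
  qed
  have be0: "b - e \<in> Sa M 0" using S0sub[OF assms(5) e0] .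
  have X: "M (b - e) (a - e) = e - a - (b - e)"
  proof -
    have "M (b - e) (a - e) = M (b - e) a - M (b - e) e" using sub[OF be0] .
    also have "M (b - e) e = b - e" using unit by simp
    also have "M (b - e) a = M a (b - e)" using comm .
    also have "M a (b - e) = M a b - M a e" using sub[OF assms(2)] .
    also have "M a e = a" using unit by simp
    finally show ?thesis using assms(6) by simp
  qed
  have main: "M b (q0 M u q1 a + a) = q1 + a"
  proof -
    have "M b (q0 M u q1 a + a) = M b (M a (q1 + e) - e + a)" unfolding q0_def ue ..
    also have "\<dots> = M b (M a (q1 + e) - e) + M b a" using add[OF assms(5)] .
    also have "M b (M a (q1 + e) - e) = M b (M a (q1 + e)) - M b e" using sub[OF assms(5)] .
    also have "M b e = b" using unit by simp
    finally show ?thesis using b1 X Mba by (simp add: algebra_simps)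
  qed
  have lamgen: "\<And>c. c \<in> Sa M 0 \<Longrightarrow> c \<in> Lam M"
  proof -
    fix c assume hc: "c \<in> Sa M 0"
    have 00: "(0::'a) \<in> Sa M 0" using S0 z0 by simp
    have c0: "M 0 c = 0" using hc S0 by simp
    have ce0: "c - e \<in> Sa M 0" using S0sub[OF hc e0] .
    have "M (0 - e) (c - e) = M (c - e) (- e)" using comm[of "0 - e" "c - e"] by simp
    also have "\<dots> = - M (c - e) e" using neg[OF ce0] .
    also have "M (c - e) e = c - e" using unit by simp
    finally have h4: "M (0 - e) (c - e) = - (c - e)" .
    have "M (- (c - e)) e = - (c - e)" using unit by simp
    have "M 0 (M c q1) = M (M 0 c) q1 - M (M (0 - u) (c - u)) (M 0 q1)"
      using sa[OF 00 hc] .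
    also have "\<dots> = M 0 q1 - M (M (0 - e) (c - e)) e" using c0 q1u ue by simp
    also have "\<dots> = c" using h4 unit[of "- (c - e)"] q1u ue by simp
    finally have "M 0 (M c q1) = c" .
    then have "M c q1 \<in> Sa M c" using comm[of "M c q1" 0] unfolding Sa_def by simp
    then show "c \<in> Lam M" unfolding Lam_def by blast
  qed
  have bL: "b \<in> Lam M" using lamgen assms(5) .
  have eq: "q1 = M b (q0 M u q1 a + a) - a" using main by simp
  show ?thesis unfolding reversible_def using lamgen[OF assms(2)] bL eq by blast
qed

end
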